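(* Let $(X, M, \ast)$ be a stationary fuzzy metric space (in the sense of George and Veeramani), and write $M(x,y)$ for the constant value of $M(x,y,t)$, $t>0$. Then for every $y\in X$, the function $M_y: X\to\mathbb{R}$, $M_y(x)=M(x,y)$, is $\mathbb{R}$-uniformly continuous; that is, for every $\varepsilon>0$ there exist $s>0$ and $\delta\in(0,1)$ such that for all $x,z\in X$, $M(x,z,s)>1-\delta$ implies $|M_y(x)-M_y(z)|<\varepsilon$.
   Context: A continuous $t$-norm $\ast$ is a continuous binary operation on $[0,1]$ that is associative, commutative, nondecreasing in each argument, and has $1$ as neutral element. A fuzzy metric space (George–Veeramani) is a triple $(X,M,\ast)$ where $X$ is a nonempty set, $\ast$ is a continuous $t$-norm, and $M: X\times X\times(0,+\infty)\to[0,1]$ satisfies, for all $x,y,z\in X$ and $s,t>0$: (GV1) $M(x,y,t)>0$; (GV2) $M(x,y,t)=1$ iff $x=y$; (GV3) $M(x,y,t)=M(y,x,t)$; (GV4) $M(x,y,t)\ast M(y,z,s)\le M(x,z,t+s)$; (GV5) $t\mapsto M(x,y,t)$ is continuous on $(0,+\infty)$. The fuzzy metric $M$ is stationary if for all $x,y\in X$ the function $t\mapsto M(x,y,t)$ is constant. A map $f:X\to\mathbb{R}$ on a fuzzy metric space $(X,M,\ast)$ is $\mathbb{R}$-uniformly continuous if for every $\varepsilon>0$ there exist $s>0$ and $\delta\in(0,1)$ such that $M(x,y,s)>1-\delta$ implies $|f(x)-f(y)|<\varepsilon$. *)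

theory Defs
  imports "HOL-Analysis.Analysis"
begin

text \<open>Continuous t-norm on [0,1]; the operation is a total function on reals but only
its behaviour on [0,1] matters.\<close>
definition cont_tnorm :: "(real \<Rightarrow> real \<Rightarrow> real) \<Rightarrow> bool" where
  "cont_tnorm T \<longleftrightarrow>
     (\<forall>a\<in>{0..1}. \<forall>b\<in>{0..1}. T a b \<in> {0..1}) \<and>
     (\<forall>a\<in>{0..1}. \<forall>b\<in>{0..1}. \<forall>c\<in>{0..1}. T (T a b) c = T a (T b c)) \<and>
     (\<forall>a\<in>{0..1}. \<forall>b\<in>{0..1}. T a b = T b a) \<and>
     (\<forall>a\<in>{0..1}. \<forall>b\<in>{0..1}. \<forall>c\<in>{0..1}. \<forall>d\<in>{0..1}. a \<le> c \<longrightarrow> b \<le> d \<longrightarrow> T a b \<le> T c d) \<and>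
     (\<forall>a\<in>{0..1}. T a 1 = a) \<and>
     continuous_on ({0..1} \<times> {0..1}) (\<lambda>p. T (fst p) (snd p))"

text \<open>George--Veeramani fuzzy metric space (X, M, T); M is only relevant for t > 0.\<close>
definition fuzzy_metric :: "'a set \<Rightarrow> ('a \<Rightarrow> 'a \<Rightarrow> real \<Rightarrow> real) \<Rightarrow> (real \<Rightarrow> real \<Rightarrow> real) \<Rightarrow> bool" where
  "fuzzy_metric X M T \<longleftrightarrow> X \<noteq> {} \<and> cont_tnorm T \<and>
     (\<forall>x\<in>X. \<forall>y\<in>X. \<forall>t>0. M x y t \<in> {0..1}) \<and>
     (\<forall>x\<in>X. \<forall>y\<in>X. \<forall>t>0. M x y t > 0) \<and>
     (\<forall>x\<in>X. \<forall>y\<in>X. \<forall>t>0. M x y t = 1 \<longleftrightarrow> x = y) \<and>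
     (\<forall>x\<in>X. \<forall>y\<in>X. \<forall>t>0. M x y t = M y x t) \<and>
     (\<forall>x\<in>X. \<forall>y\<in>X. \<forall>z\<in>X. \<forall>t>0. \<forall>s>0. T (M x y t) (M y z s) \<le> M x z (t + s)) \<and>
     (\<forall>x\<in>X. \<forall>y\<in>X. continuous_on {0<..} (M x y))"

definition stationary_fuzzy_metric :: "'a set \<Rightarrow> ('a \<Rightarrow> 'a \<Rightarrow> real \<Rightarrow> real) \<Rightarrow> bool" where
  "stationary_fuzzy_metric X M \<longleftrightarrow>
     (\<forall>x\<in>X. \<forall>y\<in>X. \<forall>t>0. \<forall>s>0. M x y t = M x y s)"

definition R_uniformly_continuous ::
    "'a set \<Rightarrow> ('a \<Rightarrow> 'a \<Rightarrow> real \<Rightarrow> real) \<Rightarrow> ('a \<Rightarrow> real) \<Rightarrow> bool" where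
  "R_uniformly_continuous X M f \<longleftrightarrow>
     (\<forall>\<epsilon>>0. \<exists>s>0. \<exists>\<delta>. 0 < \<delta> \<and> \<delta> < 1 \<and>
        (\<forall>x\<in>X. \<forall>y\<in>X. M x y s > 1 - \<delta> \<longrightarrow> \<bar>f x - f y\<bar> < \<epsilon>))"

end

theory Submission
  imports Defs
begin

lemma tnorm_near_one:
  assumes "cont_tnorm T" "e > 0"
  shows "\<exists>d>0. \<forall>a\<in>{0..1}. \<forall>b\<in>{0..1}. 1 - a < d \<longrightarrow> \<bar>T a b - b\<bar> < e"
proof -
  let ?S = "{0..1::real} \<times> {0..1::real}"
  have c: "continuous_on ?S (\<lambda>p. T (fst p) (snd p))" using assms(1) unfolding cont_tnorm_def by blast
  have "uniformly_continuous_on ?S (\<lambda>p. T (fst p) (snd p))"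
    by (rule compact_uniformly_continuous[OF c]) (simp add: compact_Times)
  then obtain d where d: "d > 0" and H: "\<forall>x\<in>?S. \<forall>x'\<in>?S. dist x' x < d \<longrightarrow>
      dist (T (fst x') (snd x')) (T (fst x) (snd x)) < e"
    using assms(2) unfolding uniformly_continuous_on_def by metis
  have one: "\<forall>b\<in>{0..1::real}. T 1 b = b" using assms(1) unfolding cont_tnorm_def by force
  show ?thesis
  proof (intro exI[of _ d] conjI ballI impI)
    fix a b :: real assume a: "a \<in> {0..1}" and b: "b \<in> {0..1}" and ad: "1 - a < d"
    have "dist (a, b) (1, b) < d" using a ad by (simp add: dist_Pair_Pair dist_real_def)
    then have "dist (T a b) (T 1 b) < e" using H a b by force
    then show "\<bar>T a b - b\<bar> < e" using one b by (simp add: dist_real_def)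
  qed (use d in auto)
qed

theorem mainTheorem1:
  fixes X :: "'a set" and M :: "'a \<Rightarrow> 'a \<Rightarrow> real \<Rightarrow> real" and T :: "real \<Rightarrow> real \<Rightarrow> real"
  assumes "fuzzy_metric X M T"
    and "stationary_fuzzy_metric X M"
    and "y \<in> X"
  shows "R_uniformly_continuous X M (\<lambda>x. M x y 1)"
  unfolding R_uniformly_continuous_def
proof (intro allI impI)
  fix e :: real assume e: "e > 0"
  have ct: "cont_tnorm T" using assms(1) unfolding fuzzy_metric_def by blast
  obtain d where d: "d > 0" and H: "\<forall>a\<in>{0..1}. \<forall>b\<in>{0..1}. 1 - a < d \<longrightarrow> \<bar>T a b - b\<bar> < e"
    using tnorm_near_one[OF ct e] by blast
  have rng: "\<And>x z. x \<in> X \<Longrightarrow> z \<in> X \<Longrightarrow> M x z 1 \<in> {0..1}" using assms(1) unfolding fuzzy_metric_def by simp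
  have sym: "\<And>x z. x \<in> X \<Longrightarrow> z \<in> X \<Longrightarrow> M x z 1 = M z x 1" using assms(1) unfolding fuzzy_metric_def by simp
  have tri: "\<And>x z w. x \<in> X \<Longrightarrow> z \<in> X \<Longrightarrow> w \<in> X \<Longrightarrow> T (M x z 1) (M z w 1) \<le> M x w 1"
  proof -
    fix x z w assume "x \<in> X" "z \<in> X" "w \<in> X"
    moreover have "\<forall>x\<in>X. \<forall>y\<in>X. \<forall>z\<in>X. \<forall>t>0. \<forall>s>0. T (M x y t) (M y z s) \<le> M x z (t + s)"
      using assms(1) unfolding fuzzy_metric_def by blast
    ultimately have "T (M x z 1) (M z w 1) \<le> M x w (1 + 1)" by (meson zero_less_one)
    moreover have "M x w (1+1) = M x w 1" using assms(2) \<open>x \<in> X\<close> \<open>w \<in> X\<close> unfolding stationary_fuzzy_metric_def by simp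
    ultimately show "T (M x z 1) (M z w 1) \<le> M x w 1" by simp
  qed
  have key: "M z y 1 - e < M x y 1" if "x \<in> X" "z \<in> X" "M x z 1 > 1 - min d (1/2)" for x z
  proof -
    have "\<bar>T (M x z 1) (M z y 1) - M z y 1\<bar> < e" using H rng that assms(3) by auto
    moreover have "T (M x z 1) (M z y 1) \<le> M x y 1" using tri that assms(3) by blast
    ultimately show ?thesis by linarith
  qed
  show "\<exists>s>0. \<exists>\<delta>. 0 < \<delta> \<and> \<delta> < 1 \<and> (\<forall>x\<in>X. \<forall>z\<in>X. 1 - \<delta> < M x z s \<longrightarrow> \<bar>M x y 1 - M z y 1\<bar> < e)"
  proof -
    have "\<forall>x\<in>X. \<forall>z\<in>X. 1 - min d (1/2) < M x z 1 \<longrightarrow> \<bar>M x y 1 - M z y 1\<bar> < e"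
    proof (intro ballI impI)
      fix x z assume x: "x \<in> X" and z: "z \<in> X" and m: "1 - min d (1/2) < M x z 1"
      have "M z y 1 - e < M x y 1" using key x z m by blast
      moreover have "M x y 1 - e < M z y 1" using key[OF z x] m sym x z by simp
      ultimately show "\<bar>M x y 1 - M z y 1\<bar> < e" by linarith
    qed
    moreover have "0 < min d (1/2)" "min d (1/2) < (1::real)" using d by auto
    ultimately show ?thesis by (intro exI[of _ 1] conjI zero_less_one exI[of _ "min d (1/2)"]) blast+
  qed
qed
end
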